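(* Let $G$ be a domino-free bipartite graph with no universal vertex, and let $\mathbf{H}(G)$ be the transitive reduction of $(\mathcal{B}(G),\preceq)$. Then every cycle of (the underlying undirected graph of) $\mathbf{H}(G)$ that does not contain $\bot$ or $\top$ has at least six non-flow-nodes.
   Context: A domino is $C_6$ plus a chord between two antipodal vertices; domino-free means no induced domino. With color classes $X,Y$, a biclique is a vertex set inducing a complete bipartite subgraph, with shores $X(B)=B\cap X$, $Y(B)=B\cap Y$; $\mathcal{B}(G)$ is the set of inclusion-wise maximal bicliques ordered by $B\preceq B'\iff X(B)\subseteq X(B')$. $\bot,\top$ are the added bottom and top elements of the Galois lattice $\mathcal{B}(G)\cup\{\bot,\top\}$. The transitive reduction has an arc $B\to B'$ iff $B'$ covers $B$. For a cycle $C$ in a directed graph (a cycle in the underlying undirected graph), a node of $C$ is a flow-node if of its two arcs in $C$ one enters and one leaves it; otherwise (both enter or both leave) it is a non-flow-node (a sink or source of $C$). A universal vertex is adjacent to all vertices of the opposite color class. *)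

theory Defs
  imports Main
begin

definition bipartite_graph :: "'a set \<Rightarrow> 'a set \<Rightarrow> ('a \<Rightarrow> 'a \<Rightarrow> bool) \<Rightarrow> bool" where
  "bipartite_graph X Y E \<longleftrightarrow> finite X \<and> finite Y \<and> X \<inter> Y = {} \<and>
     (\<forall>u v. E u v \<longleftrightarrow> E v u) \<and>
     (\<forall>u v. E u v \<longrightarrow> (u \<in> X \<and> v \<in> Y) \<or> (u \<in> Y \<and> v \<in> X))"

definition domino_edge :: "nat \<Rightarrow> nat \<Rightarrow> bool" where
  "domino_edge i j \<longleftrightarrow> i < 6 \<and> j < 6 \<and>
     (j = (i + 1) mod 6 \<or> i = (j + 1) mod 6 \<or> {i, j} = {0, 3})"

definition domino_free :: "'a set \<Rightarrow> ('a \<Rightarrow> 'a \<Rightarrow> bool) \<Rightarrow> bool" where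
  "domino_free V E \<longleftrightarrow> \<not> (\<exists>f. inj_on f {0..<6} \<and> f ` {0..<6} \<subseteq> V \<and>
      (\<forall>i<6. \<forall>j<6. E (f i) (f j) \<longleftrightarrow> domino_edge i j))"

definition universal_vertex :: "'a set \<Rightarrow> 'a set \<Rightarrow> ('a \<Rightarrow> 'a \<Rightarrow> bool) \<Rightarrow> 'a \<Rightarrow> bool" where
  "universal_vertex X Y E v \<longleftrightarrow> (v \<in> X \<and> (\<forall>y\<in>Y. E v y)) \<or> (v \<in> Y \<and> (\<forall>x\<in>X. E x v))"

definition biclique :: "'a set \<Rightarrow> 'a set \<Rightarrow> ('a \<Rightarrow> 'a \<Rightarrow> bool) \<Rightarrow> 'a set \<Rightarrow> bool" where
  "biclique X Y E B \<longleftrightarrow> B \<subseteq> X \<union> Y \<and> B \<inter> X \<noteq> {} \<and> B \<inter> Y \<noteq> {} \<and>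
     (\<forall>x\<in>B \<inter> X. \<forall>y\<in>B \<inter> Y. E x y)"

definition max_bicliques :: "'a set \<Rightarrow> 'a set \<Rightarrow> ('a \<Rightarrow> 'a \<Rightarrow> bool) \<Rightarrow> 'a set set" where
  "max_bicliques X Y E = {B. biclique X Y E B \<and> (\<forall>B'. biclique X Y E B' \<and> B \<subseteq> B' \<longrightarrow> B' = B)}"

definition biclique_le :: "'a set \<Rightarrow> 'a set \<Rightarrow> 'a set \<Rightarrow> bool" where
  "biclique_le X B B' \<longleftrightarrow> B \<inter> X \<subseteq> B' \<inter> X"

definition hasse_arc :: "'a set \<Rightarrow> 'a set \<Rightarrow> ('a \<Rightarrow> 'a \<Rightarrow> bool) \<Rightarrow> 'a set \<Rightarrow> 'a set \<Rightarrow> bool" where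
  "hasse_arc X Y E B B' \<longleftrightarrow> B \<in> max_bicliques X Y E \<and> B' \<in> max_bicliques X Y E \<and>
     biclique_le X B B' \<and> B \<noteq> B' \<and>
     \<not> (\<exists>C\<in>max_bicliques X Y E. C \<noteq> B \<and> C \<noteq> B' \<and> biclique_le X B C \<and> biclique_le X C B')"

definition ucycle :: "('n \<Rightarrow> 'n \<Rightarrow> bool) \<Rightarrow> 'n list \<Rightarrow> bool" where
  "ucycle A cs \<longleftrightarrow> length cs \<ge> 3 \<and> distinct cs \<and>
     (\<forall>i < length cs. A (cs ! i) (cs ! ((i + 1) mod length cs)) \<or>
                      A (cs ! ((i + 1) mod length cs)) (cs ! i))"

definition non_flow_node :: "('n \<Rightarrow> 'n \<Rightarrow> bool) \<Rightarrow> 'n list \<Rightarrow> nat \<Rightarrow> bool" where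
  "non_flow_node A cs i \<longleftrightarrow>
     (let k = length cs; c = cs ! i; p = cs ! ((i + k - 1) mod k); n = cs ! ((i + 1) mod k)
      in (A p c \<and> A n c) \<or> (A c p \<and> A c n))"

definition num_non_flow :: "('n \<Rightarrow> 'n \<Rightarrow> bool) \<Rightarrow> 'n list \<Rightarrow> nat" where
  "num_non_flow A cs = card {i. i < length cs \<and> non_flow_node A cs i}"

end

theory Submission
  imports Defs
begin


abbreviation MB where "MB X Y E \<equiv> max_bicliques X Y E"

lemma bipD:
  assumes "bipartite_graph X Y E"
  shows "finite X" "finite Y" "X \<inter> Y = {}" "E u v \<longleftrightarrow> E v u"
    "E u v \<Longrightarrow> (u \<in> X \<and> v \<in> Y) \<or> (u \<in> Y \<and> v \<in> X)"
  using assms unfolding bipartite_graph_def by blast+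

lemma mbD: "B \<in> max_bicliques X Y E \<Longrightarrow> biclique X Y E B"
  "B \<in> max_bicliques X Y E \<Longrightarrow> biclique X Y E B' \<Longrightarrow> B \<subseteq> B' \<Longrightarrow> B' = B"
  unfolding max_bicliques_def by auto

lemma mb_eqX:
  assumes "u \<in> MB X Y E" "v \<in> MB X Y E" "u \<inter> X = v \<inter> X"
  shows "u = v"
proof -
  have "biclique X Y E (u \<union> v)"
    using mbD(1)[OF assms(1)] mbD(1)[OF assms(2)] assms(3) unfolding biclique_def by blast
  then have "u \<union> v = u" "u \<union> v = v" using mbD(2) assms(1,2) by blast+
  thus ?thesis by blast
qed

lemma mb_antiY:
  assumes bip: "bipartite_graph X Y E" and "u \<in> MB X Y E" "v \<in> MB X Y E" "u \<inter> X \<subseteq> v \<inter> X"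
  shows "v \<inter> Y \<subseteq> u \<inter> Y"
proof -
  have "biclique X Y E (u \<union> (v \<inter> Y))"
    using mbD(1)[OF assms(2)] mbD(1)[OF assms(3)] assms(4) bipD(3)[OF bip] unfolding biclique_def by blast
  then have "u \<union> (v \<inter> Y) = u" using mbD(2) assms(2) by blast
  thus ?thesis by blast
qed

lemma mb_missX:
  assumes bip: "bipartite_graph X Y E" and v: "v \<in> MB X Y E" and "x \<in> X" "x \<notin> v"
  shows "\<exists>y\<in>v\<inter>Y. \<not> E x y"
proof (rule ccontr)
  assume "\<not> ?thesis"
  then have "biclique X Y E (insert x v)" using mbD(1)[OF v] assms(3) bipD(3)[OF bip]
    unfolding biclique_def by blast
  then have "insert x v = v" using mbD(2)[OF v] by blast
  thus False using \<open>x \<notin> v\<close> by blast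
qed

lemma mb_missY:
  assumes bip: "bipartite_graph X Y E" and v: "v \<in> MB X Y E" and "y \<in> Y" "y \<notin> v"
  shows "\<exists>x\<in>v\<inter>X. \<not> E x y"
proof (rule ccontr)
  assume "\<not> ?thesis"
  then have "biclique X Y E (insert y v)" using mbD(1)[OF v] assms(3) bipD(3)[OF bip]
    unfolding biclique_def by blast
  then have "insert y v = v" using mbD(2)[OF v] by blast
  thus False using \<open>y \<notin> v\<close> by blast
qed

lemma mb_extend:
  assumes bip: "bipartite_graph X Y E" and B: "biclique X Y E B"
  shows "\<exists>B'\<in>MB X Y E. B \<subseteq> B'"
proof -
  let ?S = "{B'. biclique X Y E B' \<and> B \<subseteq> B'}"
  have "?S \<subseteq> Pow (X \<union> Y)" unfolding biclique_def by auto
  hence fin: "finite ?S" using bipD(1,2)[OF bip] by (meson finite_Pow_iff finite_UnI finite_subset)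
  have "?S \<noteq> {}" using B by auto
  from finite_has_maximal[OF fin this] obtain M where M: "M \<in> ?S" "\<forall>b\<in>?S. M \<subseteq> b \<longrightarrow> M = b"
    by blast
  then have "M \<in> MB X Y E" unfolding max_bicliques_def by auto
  thus ?thesis using M by blast
qed

lemma domino_edge_iff:
  assumes "i < 6" "j < 6"
  shows "domino_edge i j \<longleftrightarrow> (i,j) \<in> {(0,1),(1,2),(2,3),(3,4),(4,5),(5,0),(1,0),(2,1),(3,2),(4,3),(5,4),(0,5),(0,3),(3,0)}"
proof -
  have "i = 0 \<or> i = 1 \<or> i = 2 \<or> i = 3 \<or> i = 4 \<or> i = 5" using assms by auto
  moreover have "j = 0 \<or> j = 1 \<or> j = 2 \<or> j = 3 \<or> j = 4 \<or> j = 5" using assms by auto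
  ultimately show ?thesis unfolding domino_edge_def by (elim disjE) (simp_all add: doubleton_eq_iff)
qed

lemma domino_table: assumes p: "E x y1" "E y1 x" "E x1 y1" "E y1 x1" "E x1 y" "E y x1" "E x2 y" "E y x2"
        "E x2 y2" "E y2 x2" "E x y2" "E y2 x" "E x y" "E y x"
  and n: "\<not> E x2 y1" "\<not> E y1 x2" "\<not> E x1 y2" "\<not> E y2 x1"
  and nx: "\<And>a b. a \<in> {x,x1,x2} \<Longrightarrow> b \<in> {x,x1,x2} \<Longrightarrow> \<not> E a b"
  and ny: "\<And>a b. a \<in> {y,y1,y2} \<Longrightarrow> b \<in> {y,y1,y2} \<Longrightarrow> \<not> E a b"
  and hi: "i = 0 \<or> i = 1 \<or> i = 2 \<or> i = 3 \<or> i = 4 \<or> i = (5::nat)"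
  and hj: "j = 0 \<or> j = 1 \<or> j = 2 \<or> j = 3 \<or> j = 4 \<or> j = (5::nat)"
  shows "E ([x, y1, x1, y, x2, y2] ! i) ([x, y1, x1, y, x2, y2] ! j) \<longleftrightarrow>
         (i, j) \<in> {(0, 1), (1, 2), (2, 3), (3, 4), (4, 5), (5, 0), (1, 0), (2, 1), (3, 2), (4, 3), (5, 4), (0, 5), (0, 3), (3, 0)}"
  using hi hj
  by (elim disjE) (simp_all add: p n nx ny)

lemma mb_comparable:
  assumes bip: "bipartite_graph X Y E" and df: "domino_free (X \<union> Y) E"
    and u: "u \<in> MB X Y E" and v: "v \<in> MB X Y E"
    and x: "x \<in> u" "x \<in> v" "x \<in> X" and y: "y \<in> u" "y \<in> v" "y \<in> Y"
  shows "u \<inter> X \<subseteq> v \<inter> X \<or> v \<inter> X \<subseteq> u \<inter> X"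
proof (rule ccontr)
  assume "\<not> ?thesis"
  then obtain x1 x2 where x1: "x1 \<in> u" "x1 \<in> X" "x1 \<notin> v" and x2: "x2 \<in> v" "x2 \<in> X" "x2 \<notin> u" by blast
  obtain y2 where y2: "y2 \<in> v" "y2 \<in> Y" "\<not> E x1 y2" using mb_missX[OF bip v x1(2,3)] by blast
  obtain y1 where y1: "y1 \<in> u" "y1 \<in> Y" "\<not> E x2 y1" using mb_missX[OF bip u x2(2,3)] by blast
  have Eu: "\<And>a b. a \<in> u \<Longrightarrow> a \<in> X \<Longrightarrow> b \<in> u \<Longrightarrow> b \<in> Y \<Longrightarrow> E a b"
    using mbD(1)[OF u] unfolding biclique_def by blast
  have Ev: "\<And>a b. a \<in> v \<Longrightarrow> a \<in> X \<Longrightarrow> b \<in> v \<Longrightarrow> b \<in> Y \<Longrightarrow> E a b"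
    using mbD(1)[OF v] unfolding biclique_def by blast
  have symE: "\<And>a b. E a b \<Longrightarrow> E b a" using bipD(4)[OF bip] by blast
  have XX: "\<And>a b. a \<in> X \<Longrightarrow> b \<in> X \<Longrightarrow> \<not> E a b" using bipD(3,5)[OF bip] by blast
  have YY: "\<And>a b. a \<in> Y \<Longrightarrow> b \<in> Y \<Longrightarrow> \<not> E a b" using bipD(3,5)[OF bip] by blast
  have e1: "E x y1" "E x1 y1" "E x1 y" "E x2 y" "E x2 y2" "E x y2" "E x y"
    using Eu Ev x y x1 x2 y1 y2 by auto
  have dis: "X \<inter> Y = {}" using bipD(3)[OF bip] .
  define f where "f = (\<lambda>i::nat. [x, y1, x1, y, x2, y2] ! i)"
  have map: "map f [0..<6] = [x, y1, x1, y, x2, y2]" by (simp add: f_def upt_rec)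
  have "distinct [x, y1, x1, y, x2, y2]"
    using x y x1 x2 y1 y2 e1 dis by auto
  then have inj: "inj_on f {0..<6}" using map distinct_map[of f "[0..<6]"] by simp
  have img: "f ` {0..<6} \<subseteq> X \<union> Y"
  proof -
    have "set (map f [0..<6]) \<subseteq> X \<union> Y" using map x y x1 x2 y1 y2 by simp
    thus ?thesis by simp
  qed
  have "\<forall>i<6. \<forall>j<6. E (f i) (f j) \<longleftrightarrow> domino_edge i j"
  proof (intro allI impI)
    fix i j :: nat assume ij: "i < 6" "j < 6"
    have hi: "i = 0 \<or> i = 1 \<or> i = 2 \<or> i = 3 \<or> i = 4 \<or> i = 5" using ij by auto
    have hj: "j = 0 \<or> j = 1 \<or> j = 2 \<or> j = 3 \<or> j = 4 \<or> j = 5" using ij by auto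
    have p: "E x y1" "E y1 x" "E x1 y1" "E y1 x1" "E x1 y" "E y x1" "E x2 y" "E y x2"
        "E x2 y2" "E y2 x2" "E x y2" "E y2 x" "E x y" "E y x" using e1 symE by blast+
    have n: "\<not> E x2 y1" "\<not> E y1 x2" "\<not> E x1 y2" "\<not> E y2 x1" using y1(3) y2(3) symE by blast+
    have nx: "\<And>a b. a \<in> {x,x1,x2} \<Longrightarrow> b \<in> {x,x1,x2} \<Longrightarrow> \<not> E a b" using XX x x1 x2 by blast
    have ny: "\<And>a b. a \<in> {y,y1,y2} \<Longrightarrow> b \<in> {y,y1,y2} \<Longrightarrow> \<not> E a b" using YY y y1 y2 by blast
    show "E (f i) (f j) \<longleftrightarrow> domino_edge i j"
      unfolding domino_edge_iff[OF ij] f_def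
      by (rule domino_table[OF p n nx ny hi hj])
  qed
  then show False using df inj img unfolding domino_free_def by blast
qed



locale cyc =
  fixes X Y :: "'a set" and E :: "'a \<Rightarrow> 'a \<Rightarrow> bool" and cs :: "'a set list"
  assumes bip: "bipartite_graph X Y E" and df: "domino_free (X \<union> Y) E"
    and uc: "ucycle (hasse_arc X Y E) cs"
begin

abbreviation "R \<equiv> hasse_arc X Y E"
abbreviation "k \<equiv> length cs"
definition c :: "nat \<Rightarrow> 'a set" where "c i = cs ! (i mod k)"

lemma k3: "k \<ge> 3" using uc unfolding ucycle_def by blast
lemma dist: "distinct cs" using uc unfolding ucycle_def by blast

lemma R_mb: "R u v \<Longrightarrow> u \<in> MB X Y E" "R u v \<Longrightarrow> v \<in> MB X Y E"
  unfolding hasse_arc_def by blast+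
lemma R_le: "R u v \<Longrightarrow> u \<inter> X \<subseteq> v \<inter> X"
  unfolding hasse_arc_def biclique_le_def by blast
lemma R_neq: "R u v \<Longrightarrow> u \<noteq> v"
  unfolding hasse_arc_def by blast
lemma R_cover: "R u v \<Longrightarrow> w \<in> MB X Y E \<Longrightarrow> u \<inter> X \<subseteq> w \<inter> X \<Longrightarrow> w \<inter> X \<subseteq> v \<inter> X \<Longrightarrow> w = u \<or> w = v"
  unfolding hasse_arc_def biclique_le_def by blast
lemma R_asym: "R u v \<Longrightarrow> \<not> R v u"
  using R_le R_neq R_mb mb_eqX by (metis subset_antisym)

lemma R_Y: "R u v \<Longrightarrow> v \<inter> Y \<subseteq> u \<inter> Y"
  using mb_antiY[OF bip] R_mb R_le by blast

lemma le_Y: "u \<in> MB X Y E \<Longrightarrow> v \<in> MB X Y E \<Longrightarrow> u \<inter> X \<subseteq> v \<inter> X \<Longrightarrow> v \<inter> Y \<subseteq> u \<inter> Y"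
  using mb_antiY[OF bip] by blast

lemma L1: "R a M \<Longrightarrow> R b M \<Longrightarrow> a \<noteq> b \<Longrightarrow> a \<inter> X \<subseteq> b \<inter> X \<Longrightarrow> False"
  using R_cover[of a M b] R_mb R_le R_neq by blast
lemma L1d: "R m a \<Longrightarrow> R m b \<Longrightarrow> a \<noteq> b \<Longrightarrow> a \<inter> X \<subseteq> b \<inter> X \<Longrightarrow> False"
  using R_cover[of m b a] R_mb R_le R_neq by blast

lemma comp: "u \<in> MB X Y E \<Longrightarrow> v \<in> MB X Y E \<Longrightarrow> x \<in> u \<inter> v \<inter> X \<Longrightarrow> y \<in> u \<inter> v \<inter> Y \<Longrightarrow>
   u \<inter> X \<subseteq> v \<inter> X \<or> v \<inter> X \<subseteq> u \<inter> X"
  using mb_comparable[OF bip df, of u v x y] by blast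

lemma c_adj: "R (c i) (c (Suc i)) \<or> R (c (Suc i)) (c i)"
proof -
  have "0 < k" using k3 by linarith
  then have lt: "i mod k < k" by simp
  have all: "\<forall>i < k. R (cs ! i) (cs ! ((i + 1) mod k)) \<or> R (cs ! ((i + 1) mod k)) (cs ! i)"
    using uc unfolding ucycle_def by blast
  have eq: "(i mod k + 1) mod k = Suc i mod k" using mod_Suc_eq[of i k] by simp
  show ?thesis using all[rule_format, OF lt] unfolding c_def eq .
qed

lemma c_mb: "c i \<in> MB X Y E" using c_adj[of i] R_mb by blast

lemma c_per: "c (i + k) = c i" unfolding c_def by simp

lemma kpos: "0 < k" using k3 by linarith

lemma c_eq: "c i = c j \<Longrightarrow> i mod k = j mod k"
  unfolding c_def using dist kpos by (simp add: nth_eq_iff_index_eq)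

lemma mod_neq: "a < b \<Longrightarrow> b < a + k \<Longrightarrow> a mod (k::nat) \<noteq> b mod k"
proof
  assume ab: "a < b" "b < a + k" and eq: "a mod k = b mod k"
  then have "k dvd b - a" using mod_eq_dvd_iff_nat[of a b k] by simp
  then have "k \<le> b - a" using dvd_imp_le ab by simp
  with ab show False by linarith
qed

lemma c_neq: "a < b \<Longrightarrow> b < a + k \<Longrightarrow> c a \<noteq> c b"
  using c_eq mod_neq by blast

abbreviation "up j \<equiv> R (c j) (c (Suc j))"

lemma down: "\<not> up j \<Longrightarrow> R (c (Suc j)) (c j)" using c_adj by blast

lemma uprun: "\<forall>j. a \<le> j \<and> j < b \<longrightarrow> up j \<Longrightarrow> a \<le> j \<Longrightarrow> j \<le> b \<Longrightarrow>
   c a \<inter> X \<subseteq> c j \<inter> X \<and> c j \<inter> X \<subseteq> c b \<inter> X"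
proof (induction b arbitrary: j)
  case 0 then show ?case by auto
next
  case (Suc b)
  show ?case
  proof (cases "j = Suc b")
    case True
    then show ?thesis
      using Suc.IH[of b] Suc.prems R_le[of "c b" "c (Suc b)"] by (cases "a = Suc b") auto
  next
    case False
    then show ?thesis using Suc.IH[of j] Suc.prems R_le[of "c b" "c (Suc b)"] by auto
  qed
qed

lemma downrun: "\<forall>j. a \<le> j \<and> j < b \<longrightarrow> \<not> up j \<Longrightarrow> a \<le> j \<Longrightarrow> j \<le> b \<Longrightarrow>
   c b \<inter> X \<subseteq> c j \<inter> X \<and> c j \<inter> X \<subseteq> c a \<inter> X"
proof (induction b arbitrary: j)
  case 0 then show ?case by auto
next
  case (Suc b)
  show ?case
  proof (cases "j = Suc b")
    case True
    then show ?thesis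
      using Suc.IH[of b] Suc.prems R_le[OF down[of b]] by (cases "a = Suc b") auto
  next
    case False
    then show ?thesis using Suc.IH[of j] Suc.prems R_le[OF down[of b]] by auto
  qed
qed

lemma cross:
  assumes noarc: "\<And>u v. R u v \<Longrightarrow> \<not> (P u \<and> Q v) \<and> \<not> (Q u \<and> P v)"
    and disj: "\<And>u. \<not> (P u \<and> Q u)" and PB: "\<And>u. P u \<Longrightarrow> u \<noteq> B" and QB: "\<And>u. Q u \<Longrightarrow> u \<noteq> B"
    and all: "\<forall>j. a \<le> j \<and> j \<le> a + n \<longrightarrow> P (c j) \<or> Q (c j) \<or> c j = B"
    and Pa: "P (c a)" and Qb: "Q (c (a + n))"
  shows "\<exists>j. a < j \<and> j < a + n \<and> c j = B"
  using all Pa Qb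
proof (induction n arbitrary: a)
  case 0 then show ?case using disj by auto
next
  case (Suc n)
  have "P (c (Suc a)) \<or> Q (c (Suc a)) \<or> c (Suc a) = B" using Suc.prems(1) by auto
  moreover have "\<not> Q (c (Suc a))" using noarc c_adj[of a] Suc.prems(2) by blast
  moreover
  { assume "P (c (Suc a))"
    then obtain j where "Suc a < j" "j < Suc a + n" "c j = B" using Suc.IH[of "Suc a"] Suc.prems by auto
    then have ?case by (intro exI[of _ j]) simp }
  moreover
  { assume h: "c (Suc a) = B"
    have "n \<noteq> 0" using h QB[OF Suc.prems(3)] by (cases n) auto
    then have ?case using h by (intro exI[of _ "Suc a"]) auto }
  ultimately show ?case by blast
qed

definition Smin where
  "Smin = {i. i < k \<and> R (cs!i) (cs!((i + k - 1) mod k)) \<and> R (cs!i) (cs!((i+1) mod k))}"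

lemma locmin:
  assumes "1 \<le> p" "R (c p) (c (p - 1))" "R (c p) (c (Suc p))"
  shows "p mod k \<in> Smin"
proof -
  have k0: "0 < k" by (rule kpos)
  have e1: "(p mod k + k - 1) mod k = (p - 1) mod k"
  proof -
    have "p mod k + k - 1 = p mod k + (k - 1)" using k0 by arith
    then have "(p mod k + k - 1) mod k = (p + (k - 1)) mod k" by (simp add: mod_add_left_eq)
    also have "p + (k - 1) = (p - 1) + k" using assms(1) k0 by arith
    finally show ?thesis by simp
  qed
  have e2: "(p mod k + 1) mod k = Suc p mod k" using mod_Suc_eq[of p k] by simp
  have lt: "p mod k < k" using k0 by simp
  have A1: "cs!(p mod k) = c p" "cs!((p mod k + k - 1) mod k) = c (p-1)" "cs!((p mod k + 1) mod k) = c (Suc p)"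
    by (simp_all only: c_def e1 e2)
  show ?thesis unfolding Smin_def mem_Collect_eq A1 using lt assms(2,3) by blast
qed

lemma strict: "R u v \<Longrightarrow> card (u \<inter> X) < card (v \<inter> X)"
proof -
  assume r: "R u v"
  have "u \<inter> X \<noteq> v \<inter> X" using mb_eqX[OF R_mb(1)[OF r] R_mb(2)[OF r]] R_neq[OF r] by blast
  then have "u \<inter> X \<subset> v \<inter> X" using R_le[OF r] by blast
  moreover have "finite (v \<inter> X)" using bipD(2)[OF bip] bipD(1)[OF bip] by simp
  ultimately show ?thesis by (rule psubset_card_mono[rotated])
qed

lemma ne_X: "c i \<inter> X \<noteq> {}" using mbD(1)[OF c_mb[of i]] unfolding biclique_def by blast
lemma ne_Y: "c i \<inter> Y \<noteq> {}" using mbD(1)[OF c_mb[of i]] unfolding biclique_def by blast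
lemma cE: "x \<in> c i \<Longrightarrow> x \<in> X \<Longrightarrow> y \<in> c i \<Longrightarrow> y \<in> Y \<Longrightarrow> E x y"
  using mbD(1)[OF c_mb[of i]] unfolding biclique_def by blast

lemma ext_run: fixes a b :: nat shows "(\<And>j. a < j \<Longrightarrow> j < b \<Longrightarrow> P j) \<Longrightarrow> P a \<Longrightarrow> \<forall>j. a \<le> j \<and> j < b \<longrightarrow> P j"
proof (intro allI impI)
  fix j assume h: "(\<And>j. a < j \<Longrightarrow> j < b \<Longrightarrow> P j)" "P a" "a \<le> j \<and> j < b"
  show "P j" proof (cases "j = a")
    case True then show ?thesis using h by simp
  next
    case False then have "a < j" using h(3) by simp
    then show ?thesis using h by simp
  qed
qed

lemma core: "3 \<le> card Smin"
proof -
  have k0: "0 < k" by (rule kpos)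
  obtain m where m: "m < k" "\<forall>j. j < k \<longrightarrow> card (cs!m \<inter> X) \<le> card (cs!j \<inter> X)"
    using ex_has_least_nat[of "\<lambda>j. j < k" 0 "\<lambda>j. card (cs!j \<inter> X)"] k0 by blast
  have cm: "c m = cs!m" unfolding c_def using m(1) by simp
  have minc: "card (c m \<inter> X) \<le> card (c i \<inter> X)" for i
    using m(2) k0 unfolding cm by (simp add: c_def)
  have upm: "up m" using c_adj[of m] strict[of "c (Suc m)" "c m"] minc[of "Suc m"] by linarith
  have per: "c (m + k) = c m" by (rule c_per)
  have sk: "Suc (m + k - 1) = m + k" using k0 by simp
  have nup_last: "\<not> up (m + k - 1)"
    using strict[of "c (m + k - 1)" "c m"] minc[of "m + k - 1"] unfolding sk per by linarith
  have k3': "3 \<le> k" by (rule k3)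
  have m_in: "m \<in> Smin"
  proof -
    have "R (c (m + k)) (c (m + k - 1))" using down[OF nup_last] unfolding sk .
    moreover have "R (c (m + k)) (c (Suc (m + k)))" using upm per c_per[of "Suc m"] by simp
    ultimately have "(m + k) mod k \<in> Smin" using locmin[of "m + k"] k0 by simp
    then show ?thesis using m(1) by simp
  qed
  define t1 where "t1 = (LEAST j. m \<le> j \<and> \<not> up j)"
  have "m \<le> m + k - 1" using k0 by arith
  then have ex1: "m \<le> m + k - 1 \<and> \<not> up (m + k - 1)" using nup_last by blast
  have t1a: "m \<le> t1 \<and> \<not> up t1" unfolding t1_def by (rule LeastI[where P="\<lambda>j. m \<le> j \<and> \<not> up j", OF ex1])
  have t1b: "t1 \<le> m + k - 1" unfolding t1_def by (rule Least_le[where P="\<lambda>j. m \<le> j \<and> \<not> up j", OF ex1])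
  have t1c: "\<And>j. m \<le> j \<Longrightarrow> j < t1 \<Longrightarrow> up j" using not_less_Least[of _ "\<lambda>j. m \<le> j \<and> \<not> up j"] unfolding t1_def by blast
  have mt1: "m < t1" using t1a upm by (cases "t1 = m") auto
  have U1: "\<forall>j. m \<le> j \<and> j < t1 \<longrightarrow> up j" using t1c by blast
  have hU1: "\<And>j. m \<le> j \<Longrightarrow> j \<le> t1 \<Longrightarrow> c m \<inter> X \<subseteq> c j \<inter> X \<and> c j \<inter> X \<subseteq> c t1 \<inter> X"
    using uprun[OF U1] by blast
  have Ra1: "R (c (t1 - 1)) (c t1)" using t1c[of "t1 - 1"] mt1 by (simp add: Suc_diff_1[OF order.strict_trans1[OF _ mt1]])
  show ?thesis
  proof (cases "\<exists>j. t1 < j \<and> j < m + k \<and> up j")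
    case False
    then have D: "\<forall>j. t1 \<le> j \<and> j < m + k \<longrightarrow> \<not> up j" using t1a ext_run[of t1 "m + k" "\<lambda>j. \<not> up j"] by blast
    have hD: "\<And>j. t1 \<le> j \<Longrightarrow> j \<le> m + k \<Longrightarrow> c (m + k) \<inter> X \<subseteq> c j \<inter> X \<and> c j \<inter> X \<subseteq> c t1 \<inter> X"
      using downrun[OF D] by blast
    have Rb: "R (c (Suc t1)) (c t1)" using down t1a by blast
    obtain x where x: "x \<in> c m \<inter> X" using ne_X by blast
    obtain y where y: "y \<in> c t1 \<inter> Y" using ne_Y by blast
    have "m \<le> t1 - 1" "t1 - 1 \<le> t1" using mt1 by arith+
    then have xa: "x \<in> c (t1 - 1) \<inter> X" using hU1[of "t1 - 1"] x by blast
    have "Suc t1 \<le> m + k" using t1b k0 by arith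
    then have xb: "x \<in> c (Suc t1) \<inter> X" using hD[of "Suc t1"] x per by auto
    have ya: "y \<in> c (t1 - 1) \<inter> Y" using R_Y[OF Ra1] y by auto
    have yb: "y \<in> c (Suc t1) \<inter> Y" using R_Y[OF Rb] y by auto
    have neq: "c (t1 - 1) \<noteq> c (Suc t1)" using c_neq[of "t1 - 1" "Suc t1"] mt1 k3' by simp
    have "c (t1 - 1) \<inter> X \<subseteq> c (Suc t1) \<inter> X \<or> c (Suc t1) \<inter> X \<subseteq> c (t1 - 1) \<inter> X"
      using comp[of "c (t1 - 1)" "c (Suc t1)" x y, OF c_mb c_mb] xa xb ya yb by blast
    then show ?thesis using L1[OF Ra1 Rb neq] L1[OF Rb Ra1 neq[symmetric]] by blast
  next
    case True
    define s1 where "s1 = (LEAST j. t1 < j \<and> j < m + k \<and> up j)"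
    have s1a: "t1 < s1 \<and> s1 < m + k \<and> up s1" unfolding s1_def using True by (rule LeastI_ex)
    have s1c: "\<And>j. t1 < j \<Longrightarrow> j < s1 \<Longrightarrow> \<not> up j"
    proof
      fix j assume h: "t1 < j" "j < s1" "up j"
      then have "j < m + k" using s1a by linarith
      then have "s1 \<le> j" unfolding s1_def using h by (intro Least_le) blast
      then show False using h by linarith
    qed
    have D1: "\<forall>j. t1 \<le> j \<and> j < s1 \<longrightarrow> \<not> up j" using s1c t1a ext_run[of t1 s1 "\<lambda>j. \<not> up j"] by blast
    have s1k: "s1 < m + k - 1" using s1a nup_last by (cases "s1 = m + k - 1") auto
    define t2 where "t2 = (LEAST j. s1 < j \<and> \<not> up j)"
    have ex2: "s1 < m + k - 1 \<and> \<not> up (m + k - 1)" using s1k nup_last by simp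
    have t2a: "s1 < t2 \<and> \<not> up t2" unfolding t2_def by (rule LeastI[where P="\<lambda>j. s1 < j \<and> \<not> up j", OF ex2])
    have t2b: "t2 \<le> m + k - 1" unfolding t2_def by (rule Least_le[where P="\<lambda>j. s1 < j \<and> \<not> up j", OF ex2])
    have t2c: "\<And>j. s1 < j \<Longrightarrow> j < t2 \<Longrightarrow> up j" using not_less_Least[of _ "\<lambda>j. s1 < j \<and> \<not> up j"] unfolding t2_def by blast
    have U2: "\<forall>j. s1 \<le> j \<and> j < t2 \<longrightarrow> up j" using t2c s1a ext_run[of s1 t2 "\<lambda>j. up j"] by blast
    have s1_in: "s1 mod k \<in> Smin"
    proof -
      have a: "t1 \<le> s1 - 1" "s1 - 1 < s1" and ss: "Suc (s1 - 1) = s1" and o: "1 \<le> s1" using s1a by arith+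
      have "\<not> up (s1 - 1)" using D1 a by blast
      then have "R (c s1) (c (s1 - 1))" using down[of "s1 - 1"] unfolding ss by blast
      then show ?thesis using locmin[OF o] s1a by blast
    qed
    show ?thesis
    proof (cases "\<exists>j. t2 < j \<and> j < m + k \<and> up j")
      case True
      define s3 where "s3 = (LEAST j. t2 < j \<and> j < m + k \<and> up j)"
      have s3a: "t2 < s3 \<and> s3 < m + k \<and> up s3" unfolding s3_def using True by (rule LeastI_ex)
      have s3c: "\<And>j. t2 < j \<Longrightarrow> j < s3 \<Longrightarrow> \<not> up j"
      proof
        fix j assume h: "t2 < j" "j < s3" "up j"
        then have "j < m + k" using s3a by linarith
        then have "s3 \<le> j" unfolding s3_def using h by (intro Least_le) blast
        then show False using h by linarith
      qed
      have ss: "Suc (s3 - 1) = s3" and o: "1 \<le> s3" using s3a t2a by arith+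
      have "\<not> up (s3 - 1)"
      proof (cases "s3 - 1 = t2")
        case True then show ?thesis using t2a by simp
      next
        case False then have "t2 < s3 - 1" "s3 - 1 < s3" using s3a t2a by arith+
        then show ?thesis using s3c by blast
      qed
      then have "R (c s3) (c (s3 - 1))" using down[of "s3 - 1"] unfolding ss by blast
      then have s3_in: "s3 mod k \<in> Smin" using locmin[OF o] s3a by blast
      have d1: "m \<noteq> s1 mod k" using mod_neq[of m s1] m(1) mt1 s1a by simp
      have d2: "m \<noteq> s3 mod k" using mod_neq[of m s3] m(1) mt1 s1a t2a s3a by simp
      have d3: "s1 mod k \<noteq> s3 mod k" using mod_neq[of s1 s3] mt1 s1a t2a s3a by simp
      have sub: "{m, s1 mod k, s3 mod k} \<subseteq> Smin" using m_in s1_in s3_in by blast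
      have fin: "finite Smin" unfolding Smin_def by simp
      have "card {m, s1 mod k, s3 mod k} = 3" using d1 d2 d3 by simp
      then show ?thesis using card_mono[OF fin sub] by simp
    next
      case False
      then have D2: "\<forall>j. t2 \<le> j \<and> j < m + k \<longrightarrow> \<not> up j" using t2a ext_run[of t2 "m + k" "\<lambda>j. \<not> up j"] by blast
      have hD1: "\<And>j. t1 \<le> j \<Longrightarrow> j \<le> s1 \<Longrightarrow> c s1 \<inter> X \<subseteq> c j \<inter> X \<and> c j \<inter> X \<subseteq> c t1 \<inter> X"
        using downrun[OF D1] by blast
      have hU2: "\<And>j. s1 \<le> j \<Longrightarrow> j \<le> t2 \<Longrightarrow> c s1 \<inter> X \<subseteq> c j \<inter> X \<and> c j \<inter> X \<subseteq> c t2 \<inter> X"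
        using uprun[OF U2] by blast
      have hD2: "\<And>j. t2 \<le> j \<Longrightarrow> j \<le> m + k \<Longrightarrow> c m \<inter> X \<subseteq> c j \<inter> X \<and> c j \<inter> X \<subseteq> c t2 \<inter> X"
        using downrun[OF D2] unfolding per by blast
      have leY: "\<And>i j. c i \<inter> X \<subseteq> c j \<inter> X \<Longrightarrow> c j \<inter> Y \<subseteq> c i \<inter> Y" using le_Y c_mb by blast
      have ar: "m \<le> t1 - 1" "t1 - 1 \<le> t1" "t1 \<le> Suc t1" "Suc t1 \<le> s1" "Suc m \<le> t1" "m \<le> Suc m"
        "t2 \<le> m + k - 1" "m + k - 1 \<le> m + k" "t2 \<le> m + k" "m \<le> t1" "t1 \<le> s1" "s1 \<le> t2"
        "t1 - 1 < Suc t1" "Suc t1 < t1 - 1 + k" "Suc m < m + k - 1" "m + k - 1 < Suc m + k"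
        using mt1 s1a t2a t2b k3' by arith+
      have disjA: "c m \<inter> c s1 \<inter> X = {}"
      proof (rule ccontr)
        assume "c m \<inter> c s1 \<inter> X \<noteq> {}"
        then obtain x where x: "x \<in> c m" "x \<in> c s1" "x \<in> X" by blast
        obtain y where y: "y \<in> c t1 \<inter> Y" using ne_Y by blast
        have Rb: "R (c (Suc t1)) (c t1)" using down t1a by blast
        have xa: "x \<in> c (t1 - 1) \<inter> X" using hU1[of "t1 - 1"] x ar by blast
        have xb: "x \<in> c (Suc t1) \<inter> X" using hD1[of "Suc t1"] x ar by blast
        have ya: "y \<in> c (t1 - 1) \<inter> Y" using R_Y[OF Ra1] y by blast
        have yb: "y \<in> c (Suc t1) \<inter> Y" using R_Y[OF Rb] y by blast
        have neq: "c (t1 - 1) \<noteq> c (Suc t1)" using c_neq[of "t1 - 1" "Suc t1"] ar by blast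
        have "c (t1 - 1) \<inter> X \<subseteq> c (Suc t1) \<inter> X \<or> c (Suc t1) \<inter> X \<subseteq> c (t1 - 1) \<inter> X"
          using comp[of "c (t1 - 1)" "c (Suc t1)" x y, OF c_mb c_mb] xa xb ya yb by blast
        then show False using L1[OF Ra1 Rb neq] L1[OF Rb Ra1 neq[symmetric]] by blast
      qed
      have disjC: "c t1 \<inter> c t2 \<inter> Y = {}"
      proof (rule ccontr)
        assume "c t1 \<inter> c t2 \<inter> Y \<noteq> {}"
        then obtain y where y: "y \<in> c t1" "y \<in> c t2" "y \<in> Y" by blast
        obtain x where x: "x \<in> c m \<inter> X" using ne_X by blast
        have Ra: "R (c m) (c (Suc m))" using upm .
        have Rb: "R (c m) (c (m + k - 1))" using down[OF nup_last] unfolding sk per .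
        have xa: "x \<in> c (Suc m) \<inter> X" using hU1[of "Suc m"] x ar by blast
        have xb: "x \<in> c (m + k - 1) \<inter> X" using hD2[of "m + k - 1"] x ar by blast
        have ya: "y \<in> c (Suc m) \<inter> Y" using leY[of "Suc m" t1] hU1[of "Suc m"] ar y by blast
        have yb: "y \<in> c (m + k - 1) \<inter> Y" using leY[of "m + k - 1" t2] hD2[of "m + k - 1"] ar y by blast
        have neq: "c (Suc m) \<noteq> c (m + k - 1)" using c_neq[of "Suc m" "m + k - 1"] ar by blast
        have "c (Suc m) \<inter> X \<subseteq> c (m + k - 1) \<inter> X \<or> c (m + k - 1) \<inter> X \<subseteq> c (Suc m) \<inter> X"
          using comp[of "c (Suc m)" "c (m + k - 1)" x y, OF c_mb c_mb] xa xb ya yb by blast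
        then show False using L1d[OF Ra Rb neq] L1d[OF Rb Ra neq[symmetric]] by blast
      qed
      obtain x1 where x1: "x1 \<in> c m" "x1 \<in> X" using ne_X by blast
      obtain x2 where x2: "x2 \<in> c s1" "x2 \<in> X" using ne_X by blast
      obtain y1 where y1: "y1 \<in> c t1" "y1 \<in> Y" using ne_Y by blast
      obtain y2 where y2: "y2 \<in> c t2" "y2 \<in> Y" using ne_Y by blast
      have x1t1: "x1 \<in> c t1" using hU1[of t1] x1 ar by blast
      have x2t1: "x2 \<in> c t1" using hD1[of s1] x2 ar by blast
      have x1t2: "x1 \<in> c t2" using hD2[of "m + k"] x1 ar by blast
      have x2t2: "x2 \<in> c t2" using hU2[of s1] x2 ar by blast
      have Es: "E x1 y1" "E x2 y1" "E x1 y2" "E x2 y2"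
        using cE x1 x2 y1 y2 x1t1 x2t1 x1t2 x2t2 by blast+
      have dis: "X \<inter> Y = {}" using bipD(3)[OF bip] .
      have bic: "biclique X Y E {x1, x2, y1, y2}"
        unfolding biclique_def using Es x1 x2 y1 y2 dis by blast
      obtain B where B: "B \<in> MB X Y E" "{x1, x2, y1, y2} \<subseteq> B" using mb_extend[OF bip bic] by blast
      have cmpB: "c j \<inter> X \<subseteq> B \<inter> X \<or> B \<inter> X \<subseteq> c j \<inter> X" if j: "m \<le> j" "j \<le> m + k" for j
      proof -
        have "\<exists>x y. x \<in> c j \<and> x \<in> B \<and> x \<in> X \<and> y \<in> c j \<and> y \<in> B \<and> y \<in> Y"
        proof (cases "j \<le> t1")
          case True
          have "x1 \<in> c j" using hU1[of j] True j x1 by blast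
          moreover have "y1 \<in> c j" using leY[of j t1] hU1[of j] True j y1 by blast
          ultimately show ?thesis using B x1 y1 by blast
        next
          case F1: False
          show ?thesis
          proof (cases "j \<le> s1")
            case True
            have "x2 \<in> c j" using hD1[of j] True F1 x2 by auto
            moreover have "y1 \<in> c j" using leY[of j t1] hD1[of j] True F1 y1 by auto
            ultimately show ?thesis using B x2 y1 by blast
          next
            case F2: False
            show ?thesis
            proof (cases "j \<le> t2")
              case True
              have "x2 \<in> c j" using hU2[of j] True F2 x2 by auto
              moreover have "y2 \<in> c j" using leY[of j t2] hU2[of j] True F2 y2 by auto
              ultimately show ?thesis using B x2 y2 by blast
            next
              case F3: False
              have "x1 \<in> c j" using hD2[of j] F3 j x1 by auto
              moreover have "y2 \<in> c j" using leY[of j t2] hD2[of j] F3 j y2 by auto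
              ultimately show ?thesis using B x1 y2 by blast
            qed
          qed
        qed
        then obtain x y where "x \<in> c j \<inter> B \<inter> X" "y \<in> c j \<inter> B \<inter> Y" by blast
        then show ?thesis using comp[of "c j" B x y, OF c_mb B(1)] by blast
      qed
      define P where "P u \<longleftrightarrow> u \<in> MB X Y E \<and> u \<inter> X \<subseteq> B \<inter> X \<and> u \<noteq> B" for u
      define Q where "Q u \<longleftrightarrow> u \<in> MB X Y E \<and> B \<inter> X \<subseteq> u \<inter> X \<and> u \<noteq> B" for u
      have noarc: "\<not> (P u \<and> Q v) \<and> \<not> (Q u \<and> P v)" if r: "R u v" for u v
      proof -
        have 1: "\<not> (P u \<and> Q v)" using R_cover[OF r B(1)] unfolding P_def Q_def by blast
        have 2: "\<not> (Q u \<and> P v)"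
        proof
          assume h: "Q u \<and> P v"
          then have "v \<inter> X = B \<inter> X" using R_le[OF r] unfolding P_def Q_def by blast
          then have "v = B" using mb_eqX[OF R_mb(2)[OF r] B(1)] by blast
          then show False using h unfolding P_def by blast
        qed
        show ?thesis using 1 2 by blast
      qed
      have disjPQ: "\<not> (P u \<and> Q u)" for u
      proof
        assume h: "P u \<and> Q u"
        then have "u \<inter> X = B \<inter> X" "u \<in> MB X Y E" unfolding P_def Q_def by blast+
        then have "u = B" using mb_eqX[OF _ B(1)] by blast
        then show False using h unfolding P_def by blast
      qed
      have disjQP: "\<not> (Q u \<and> P u)" for u using disjPQ[of u] by blast
      have PB: "P u \<Longrightarrow> u \<noteq> B" for u unfolding P_def by blast
      have QB: "Q u \<Longrightarrow> u \<noteq> B" for u unfolding Q_def by blast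
      have allj: "P (c j) \<or> Q (c j) \<or> c j = B" if "m \<le> j" "j \<le> m + k" for j
        using cmpB[OF that] c_mb[of j] unfolding P_def Q_def by blast
      have Pm: "P (c m)"
      proof -
        have "\<not> B \<inter> X \<subseteq> c m \<inter> X" using B x2 disjA by blast
        then have "c m \<inter> X \<subseteq> B \<inter> X" using cmpB[of m] by auto
        moreover have "c m \<noteq> B" using B x2 disjA by blast
        ultimately show ?thesis unfolding P_def using c_mb by blast
      qed
      have Pmk: "P (c (m + k))" using Pm per by simp
      have Qt1: "Q (c t1)"
      proof -
        have "\<not> c t1 \<inter> X \<subseteq> B \<inter> X"
        proof
          assume "c t1 \<inter> X \<subseteq> B \<inter> X"
          then have "B \<inter> Y \<subseteq> c t1 \<inter> Y" using le_Y[OF c_mb B(1)] by blast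
          then show False using B y2 disjC by blast
        qed
        then have "B \<inter> X \<subseteq> c t1 \<inter> X" using cmpB[of t1] ar by auto
        moreover have "c t1 \<noteq> B" using B y2 disjC by blast
        ultimately show ?thesis unfolding Q_def using c_mb by blast
      qed
      have e1: "m + (t1 - m) = t1" and e2: "t1 + (m + k - t1) = m + k" using ar by arith+
      have al1: "\<forall>j. m \<le> j \<and> j \<le> m + (t1 - m) \<longrightarrow> P (c j) \<or> Q (c j) \<or> c j = B"
        unfolding e1
      proof (intro allI impI)
        fix j assume "m \<le> j \<and> j \<le> t1"
        then have "m \<le> j" "j \<le> m + k" using ar by linarith+
        then show "P (c j) \<or> Q (c j) \<or> c j = B" using allj by blast
      qed
      have Qt1': "Q (c (m + (t1 - m)))" unfolding e1 by (rule Qt1)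
      have "\<exists>j. m < j \<and> j < m + (t1 - m) \<and> c j = B"
        by (rule cross[where P=P and Q=Q and B=B, OF noarc disjPQ PB QB al1 Pm Qt1'])
      then obtain j1 where j1: "m < j1" "j1 < t1" "c j1 = B" unfolding e1 by blast
      have na': "\<And>u v. R u v \<Longrightarrow> \<not> (Q u \<and> P v) \<and> \<not> (P u \<and> Q v)" using noarc by blast
      have al2: "\<forall>j. t1 \<le> j \<and> j \<le> t1 + (m + k - t1) \<longrightarrow> Q (c j) \<or> P (c j) \<or> c j = B"
        unfolding e2
      proof (intro allI impI)
        fix j assume "t1 \<le> j \<and> j \<le> m + k"
        then have "m \<le> j" "j \<le> m + k" using ar by linarith+
        then show "Q (c j) \<or> P (c j) \<or> c j = B" using allj by blast
      qed
      have Pmk': "P (c (t1 + (m + k - t1)))" unfolding e2 by (rule Pmk)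
      have "\<exists>j. t1 < j \<and> j < t1 + (m + k - t1) \<and> c j = B"
        by (rule cross[where P=Q and Q=P and B=B, OF na' disjQP QB PB al2 Qt1 Pmk'])
      then obtain j2 where j2: "t1 < j2" "j2 < m + k" "c j2 = B" unfolding e2 by blast
      have "c j1 \<noteq> c j2" using c_neq[of j1 j2] j1 j2 by linarith
      then show ?thesis using j1 j2 by simp
    qed
  qed
qed

end

lemma hasse_swap:
  assumes bip: "bipartite_graph X Y E"
  shows "hasse_arc Y X E u v = hasse_arc X Y E v u"
proof -
  have bip': "bipartite_graph Y X E" using bip unfolding bipartite_graph_def by blast
  have symE: "\<And>a b. E a b \<Longrightarrow> E b a" using bipD(4)[OF bip] by blast
  have bc: "biclique Y X E B = biclique X Y E B" for B unfolding biclique_def using symE by blast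
  have mb: "max_bicliques Y X E = max_bicliques X Y E" unfolding max_bicliques_def bc ..
  have le: "biclique_le Y a b = biclique_le X b a" if "a \<in> MB X Y E" "b \<in> MB X Y E" for a b
    unfolding biclique_le_def using mb_antiY[OF bip, of b a] mb_antiY[OF bip', of a b] mb that by blast
  show ?thesis unfolding hasse_arc_def mb using le by blast
qed

theorem lemma2:
  fixes X Y :: "'a set" and E :: "'a \<Rightarrow> 'a \<Rightarrow> bool" and cs :: "'a set list"
  assumes "bipartite_graph X Y E"
    and "domino_free (X \<union> Y) E"
    and "\<forall>v \<in> X \<union> Y. \<not> universal_vertex X Y E v"
    and "ucycle (hasse_arc X Y E) cs"
  shows "num_non_flow (hasse_arc X Y E) cs \<ge> 6"
proof -
  let ?R = "hasse_arc X Y E"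
  let ?k = "length cs"
  have c1: "cyc X Y E cs" using assms by (simp add: cyc_def)
  have sw: "\<And>u v. hasse_arc Y X E u v = ?R v u" using hasse_swap[OF assms(1)] by blast
  have bip': "bipartite_graph Y X E" using assms(1) unfolding bipartite_graph_def by blast
  have df': "domino_free (Y \<union> X) E" using assms(2) by (simp add: Un_commute)
  have uc': "ucycle (hasse_arc Y X E) cs" using assms(4) unfolding ucycle_def sw by blast
  have c2: "cyc Y X E cs" using bip' df' uc' by (simp add: cyc_def)
  let ?Smin = "{i. i < ?k \<and> ?R (cs!i) (cs!((i + ?k - 1) mod ?k)) \<and> ?R (cs!i) (cs!((i+1) mod ?k))}"
  let ?Smax = "{i. i < ?k \<and> ?R (cs!((i + ?k - 1) mod ?k)) (cs!i) \<and> ?R (cs!((i+1) mod ?k)) (cs!i)}"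
  have h1: "3 \<le> card ?Smin" using cyc.core[OF c1] unfolding cyc.Smin_def[OF c1] .
  have h2: "3 \<le> card ?Smax" using cyc.core[OF c2] unfolding cyc.Smin_def[OF c2] sw .
  have asym: "\<And>u v. ?R u v \<Longrightarrow> \<not> ?R v u" using cyc.R_asym[OF c1] by blast
  have dj: "?Smin \<inter> ?Smax = {}" using asym by blast
  have sub: "?Smin \<union> ?Smax \<subseteq> {i. i < ?k \<and> non_flow_node ?R cs i}"
    unfolding non_flow_node_def Let_def by auto
  have fin: "finite {i. i < ?k \<and> non_flow_node ?R cs i}" by simp
  have "card (?Smin \<union> ?Smax) = card ?Smin + card ?Smax"
    by (rule card_Un_disjoint[OF _ _ dj]) simp_all
  then have "6 \<le> card (?Smin \<union> ?Smax)" using h1 h2 by linarith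
  also have "\<dots> \<le> card {i. i < ?k \<and> non_flow_node ?R cs i}" by (rule card_mono[OF fin sub])
  finally show ?thesis unfolding num_non_flow_def .
qed


end
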